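(* Let $G$ be a graph on which a vertex-edge marking game $\mathcal G$ is being played, and let $n\ge 0$ be an integer. If at some round it is Bob's turn and there is an $n$-free path in $G$, then Bob has a strategy forcing the final score of $\mathcal G$ to be at least $n+3$.
   Context: The vertex-edge marking game on a graph $G=(V,E)$ (finite or infinite) is played by Alice, who marks vertices, and Bob, who marks edges. Initially nothing is marked. The game proceeds in rounds $r=1,2,\dots$; in each round Alice first marks one unmarked vertex, then Bob marks one unmarked edge. For a finite graph the game ends when either player has no move; for an infinite graph it continues forever. After round $r$, the vertex score of $v$ is $0$ if $v$ is marked, and otherwise the number of marked edges incident to $v$. The $r$-round score is the supremum over $v\in V$ of the vertex scores after round $r$, and the final score of the game is the supremum of the $r$-round scores over all rounds. In a position of the game, an $n$-free path is a path $P$ in $G$ with vertex sequence $v_0,\dots,v_k$, $k\ge 2$, such that: the first and last edges $v_0v_1$ and $v_{k-1}v_k$ are marked; the interior vertices $v_1,\dots,v_{k-1}$ are unmarked; and each interior vertex is incident to at least $n+1$ edges not in $P$, at least $n$ of which are marked. *)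

theory Defs
  imports Main "HOL-Library.Extended_Nat"
begin

definition graph :: "'v set \<Rightarrow> 'v set set \<Rightarrow> bool" where
  "graph V E \<longleftrightarrow> (\<forall>e\<in>E. \<exists>u v. u \<in> V \<and> v \<in> V \<and> u \<noteq> v \<and> e = {u, v})"

text \<open>A history is the list of completed rounds (Alice's vertex, Bob's edge).\<close>
definition mverts :: "('v \<times> 'v set) list \<Rightarrow> 'v set" where
  "mverts h = fst ` set h"

definition medges :: "('v \<times> 'v set) list \<Rightarrow> 'v set set" where
  "medges h = snd ` set h"

inductive legal_hist :: "'v set \<Rightarrow> 'v set set \<Rightarrow> ('v \<times> 'v set) list \<Rightarrow> bool"
  for V E where
  Nil: "legal_hist V E []"
| snoc: "legal_hist V E h \<Longrightarrow> x \<in> V \<Longrightarrow> x \<notin> mverts h \<Longrightarrow> e \<in> E \<Longrightarrow> e \<notin> medges h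
         \<Longrightarrow> legal_hist V E (h @ [(x, e)])"

definition vertex_score :: "'v set \<Rightarrow> 'v set set \<Rightarrow> 'v \<Rightarrow> nat" where
  "vertex_score MV ME v = (if v \<in> MV then 0 else card {e \<in> ME. v \<in> e})"

definition round_score :: "'v set \<Rightarrow> ('v \<times> 'v set) list \<Rightarrow> enat" where
  "round_score V h = (SUP v\<in>V. enat (vertex_score (mverts h) (medges h) v))"

text \<open>A play: rounds p 0, p 1, ..., p (N-1) (N possibly infinite).\<close>
definition final_score :: "'v set \<Rightarrow> (nat \<Rightarrow> 'v \<times> 'v set) \<Rightarrow> enat \<Rightarrow> enat" where
  "final_score V p N = (SUP r\<in>{r. enat r \<le> N}. round_score V (map p [0..<r]))"

text \<open>Every prefix is legal, and if the play is finite the game has ended: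
  Alice has no unmarked vertex, or Bob has no unmarked edge (any further Alice move
  in an incomplete last round cannot raise the score).\<close>
definition maximal_play :: "'v set \<Rightarrow> 'v set set \<Rightarrow> (nat \<Rightarrow> 'v \<times> 'v set) \<Rightarrow> enat \<Rightarrow> bool" where
  "maximal_play V E p N \<longleftrightarrow>
     (\<forall>r. enat r \<le> N \<longrightarrow> legal_hist V E (map p [0..<r])) \<and>
     (\<forall>m. N = enat m \<longrightarrow> V \<subseteq> mverts (map p [0..<m]) \<or> E \<subseteq> medges (map p [0..<m]))"

text \<open>A (history dependent) strategy for Bob: given the completed rounds and Alice's current
  vertex, it returns a legal edge whenever Bob has a move.\<close>
definition bob_strategy :: "'v set \<Rightarrow> 'v set set \<Rightarrow> (('v \<times> 'v set) list \<Rightarrow> 'v \<Rightarrow> 'v set) \<Rightarrow> bool" where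
  "bob_strategy V E \<sigma> \<longleftrightarrow>
     (\<forall>h x. legal_hist V E h \<and> x \<in> V \<and> x \<notin> mverts h \<and> E - medges h \<noteq> {}
        \<longrightarrow> \<sigma> h x \<in> E \<and> \<sigma> h x \<notin> medges h)"

text \<open>The play extends history h, Alice's move in the current round is x, and from
  the current round on Bob follows \<sigma>.\<close>
definition follows :: "('v \<times> 'v set) list \<Rightarrow> 'v \<Rightarrow> (('v \<times> 'v set) list \<Rightarrow> 'v \<Rightarrow> 'v set)
                        \<Rightarrow> (nat \<Rightarrow> 'v \<times> 'v set) \<Rightarrow> enat \<Rightarrow> bool" where
  "follows h x \<sigma> p N \<longleftrightarrow>
     (\<forall>i<length h. p i = h ! i) \<and> enat (length h) \<le> N \<and>
     (enat (length h) < N \<longrightarrow> fst (p (length h)) = x) \<and>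
     (\<forall>i. length h \<le> i \<and> enat i < N \<longrightarrow> snd (p i) = \<sigma> (map p [0..<i]) (fst (p i)))"

definition at_least :: "nat \<Rightarrow> 'a set \<Rightarrow> bool" where
  "at_least k A \<longleftrightarrow> infinite A \<or> k \<le> card A"

definition path_edges :: "'v list \<Rightarrow> 'v set set" where
  "path_edges vs = {{vs ! i, vs ! Suc i} | i. i < length vs - 1}"

definition n_free_path :: "'v set \<Rightarrow> 'v set set \<Rightarrow> 'v set \<Rightarrow> 'v set set \<Rightarrow> nat \<Rightarrow> 'v list \<Rightarrow> bool" where
  "n_free_path V E MV ME n vs \<longleftrightarrow>
     (let k = length vs - 1 in
      3 \<le> length vs \<and> distinct vs \<and> set vs \<subseteq> V \<and>
      (\<forall>i<k. {vs ! i, vs ! Suc i} \<in> E) \<and>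
      {vs ! 0, vs ! 1} \<in> ME \<and> {vs ! (k - 1), vs ! k} \<in> ME \<and>
      (\<forall>i. 0 < i \<and> i < k \<longrightarrow>
          vs ! i \<notin> MV \<and>
          at_least (n + 1) {e \<in> E. vs ! i \<in> e \<and> e \<notin> path_edges vs} \<and>
          at_least n {e \<in> ME. vs ! i \<in> e \<and> e \<notin> path_edges vs}))"

end

theory Submission
  imports Defs
begin


lemma at_least_mono: "at_least k A \<Longrightarrow> A \<subseteq> B \<Longrightarrow> at_least k B"
  unfolding at_least_def by (meson card_mono infinite_super order_trans)

lemma at_least_insert: "at_least k A \<Longrightarrow> a \<notin> A \<Longrightarrow> at_least (Suc k) (insert a A)"
  unfolding at_least_def by auto

lemma at_least_card: "at_least k A \<Longrightarrow> finite A \<Longrightarrow> k \<le> card A"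
  unfolding at_least_def by auto

lemma pe_mem: "i < length vs - 1 \<Longrightarrow> {vs ! i, vs ! Suc i} \<in> path_edges vs"
  unfolding path_edges_def by blast

lemma fp_def': "n_free_path V E MV ME n vs \<longleftrightarrow>
      3 \<le> length vs \<and> distinct vs \<and> set vs \<subseteq> V \<and>
      (\<forall>i<length vs - 1. {vs ! i, vs ! Suc i} \<in> E) \<and>
      {vs ! 0, vs ! 1} \<in> ME \<and> {vs ! (length vs - 1 - 1), vs ! (length vs - 1)} \<in> ME \<and>
      (\<forall>i. 0 < i \<and> i < length vs - 1 \<longrightarrow>
          vs ! i \<notin> MV \<and>
          at_least (n + 1) {e \<in> E. vs ! i \<in> e \<and> e \<notin> path_edges vs} \<and>
          at_least n {e \<in> ME. vs ! i \<in> e \<and> e \<notin> path_edges vs})"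
  unfolding n_free_path_def Let_def by simp

lemma fp_mono:
  assumes fp: "n_free_path V E MV ME n vs" and sub: "ME \<subseteq> ME'"
    and mv: "\<forall>i. 0 < i \<and> i < length vs - 1 \<longrightarrow> vs ! i \<notin> MV'"
  shows "n_free_path V E MV' ME' n vs"
proof -
  from fp have A: "3 \<le> length vs" "distinct vs" "set vs \<subseteq> V"
      "\<forall>i<length vs - 1. {vs ! i, vs ! Suc i} \<in> E"
      "{vs ! 0, vs ! 1} \<in> ME" "{vs ! (length vs - 1 - 1), vs ! (length vs - 1)} \<in> ME"
      "\<forall>i. 0 < i \<and> i < length vs - 1 \<longrightarrow>
          vs ! i \<notin> MV \<and>
          at_least (n + 1) {e \<in> E. vs ! i \<in> e \<and> e \<notin> path_edges vs} \<and>
          at_least n {e \<in> ME. vs ! i \<in> e \<and> e \<notin> path_edges vs}"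
    unfolding fp_def' by blast+
  have 7: "\<forall>i. 0 < i \<and> i < length vs - 1 \<longrightarrow>
          vs ! i \<notin> MV' \<and>
          at_least (n + 1) {e \<in> E. vs ! i \<in> e \<and> e \<notin> path_edges vs} \<and>
          at_least n {e \<in> ME'. vs ! i \<in> e \<and> e \<notin> path_edges vs}"
  proof (intro allI impI)
    fix i assume i: "0 < i \<and> i < length vs - 1"
    then have B: "at_least (n + 1) {e \<in> E. vs ! i \<in> e \<and> e \<notin> path_edges vs}"
       "at_least n {e \<in> ME. vs ! i \<in> e \<and> e \<notin> path_edges vs}" using A(7) by blast+
    have "{e \<in> ME. vs ! i \<in> e \<and> e \<notin> path_edges vs} \<subseteq> {e \<in> ME'. vs ! i \<in> e \<and> e \<notin> path_edges vs}"
      using sub by blast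
    then have "at_least n {e \<in> ME'. vs ! i \<in> e \<and> e \<notin> path_edges vs}"
      using B(2) at_least_mono by blast
    then show "vs ! i \<notin> MV' \<and>
          at_least (n + 1) {e \<in> E. vs ! i \<in> e \<and> e \<notin> path_edges vs} \<and>
          at_least n {e \<in> ME'. vs ! i \<in> e \<and> e \<notin> path_edges vs}"
      using B(1) mv i by blast
  qed
  have 5: "{vs ! 0, vs ! 1} \<in> ME'" "{vs ! (length vs - 1 - 1), vs ! (length vs - 1)} \<in> ME'"
    using A(5,6) sub by blast+
  show ?thesis unfolding fp_def' using A(1-4) 5 7 by blast
qed

lemma pe_tl: "path_edges (tl vs) \<subseteq> path_edges vs"
proof
  fix e assume "e \<in> path_edges (tl vs)"
  then obtain i where i: "i < length (tl vs) - 1" "e = {tl vs ! i, tl vs ! Suc i}"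
    unfolding path_edges_def by blast
  then have "e = {vs ! Suc i, vs ! Suc (Suc i)}" by (simp add: nth_tl)
  moreover have "Suc i < length vs - 1" using i by simp
  ultimately show "e \<in> path_edges vs" using pe_mem by blast
qed

lemma pe_take: "path_edges (take m vs) \<subseteq> path_edges vs"
proof
  fix e assume "e \<in> path_edges (take m vs)"
  then obtain i where i: "i < length (take m vs) - 1" "e = {take m vs ! i, take m vs ! Suc i}"
    unfolding path_edges_def by blast
  then have "e = {vs ! i, vs ! Suc i}" by simp
  moreover have "i < length vs - 1" using i by simp
  ultimately show "e \<in> path_edges vs" using pe_mem by blast
qed

lemma fp_tl:
  assumes fp: "n_free_path V E MV ME n vs" and l: "4 \<le> length vs" and m: "{vs ! 1, vs ! 2} \<in> ME"
  shows "n_free_path V E MV ME n (tl vs)"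
proof -
  from fp have A: "3 \<le> length vs" "distinct vs" "set vs \<subseteq> V"
      "\<forall>i<length vs - 1. {vs ! i, vs ! Suc i} \<in> E"
      "{vs ! (length vs - 1 - 1), vs ! (length vs - 1)} \<in> ME"
      "\<forall>i. 0 < i \<and> i < length vs - 1 \<longrightarrow>
          vs ! i \<notin> MV \<and>
          at_least (n + 1) {e \<in> E. vs ! i \<in> e \<and> e \<notin> path_edges vs} \<and>
          at_least n {e \<in> ME. vs ! i \<in> e \<and> e \<notin> path_edges vs}"
    unfolding fp_def' by blast+
  have nt: "\<And>i. i < length vs - 1 \<Longrightarrow> tl vs ! i = vs ! Suc i" by (simp add: nth_tl)
  have L: "length (tl vs) = length vs - 1" by simp
  have 1: "3 \<le> length (tl vs)" using l by simp
  have 2: "distinct (tl vs)" using A(2) by (simp add: distinct_tl)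
  have 3: "set (tl vs) \<subseteq> V" using A(3) by (cases vs) auto
  have 4: "\<forall>i<length (tl vs) - 1. {tl vs ! i, tl vs ! Suc i} \<in> E"
    using A(4) nt L by auto
  have 5: "{tl vs ! 0, tl vs ! 1} \<in> ME" using m nt l by (simp add: numeral_2_eq_2)
  have 6: "{tl vs ! (length (tl vs) - 1 - 1), tl vs ! (length (tl vs) - 1)} \<in> ME"
  proof -
    have "tl vs ! (length (tl vs) - 1 - 1) = vs ! (length vs - 1 - 1)"
      using l nt[of "length (tl vs) - 1 - 1"] by (simp add: Suc_diff_Suc)
    moreover have "tl vs ! (length (tl vs) - 1) = vs ! (length vs - 1)"
      using l nt[of "length (tl vs) - 1"] by (simp add: Suc_diff_Suc)
    ultimately show ?thesis using A(5) by simp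
  qed
  have 7: "\<forall>i. 0 < i \<and> i < length (tl vs) - 1 \<longrightarrow>
          tl vs ! i \<notin> MV \<and>
          at_least (n + 1) {e \<in> E. tl vs ! i \<in> e \<and> e \<notin> path_edges (tl vs)} \<and>
          at_least n {e \<in> ME. tl vs ! i \<in> e \<and> e \<notin> path_edges (tl vs)}"
  proof (intro allI impI)
    fix i assume i: "0 < i \<and> i < length (tl vs) - 1"
    then have "i < length vs - 1" by (simp only: length_tl) linarith
    then have ti: "tl vs ! i = vs ! Suc i" by (rule nt)
    have "0 < Suc i \<and> Suc i < length vs - 1" using i by (simp only: length_tl) linarith
    then have B: "vs ! Suc i \<notin> MV"
          "at_least (n + 1) {e \<in> E. vs ! Suc i \<in> e \<and> e \<notin> path_edges vs}"
          "at_least n {e \<in> ME. vs ! Suc i \<in> e \<and> e \<notin> path_edges vs}"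
      using A(6) by blast+
    show "tl vs ! i \<notin> MV \<and>
          at_least (n + 1) {e \<in> E. tl vs ! i \<in> e \<and> e \<notin> path_edges (tl vs)} \<and>
          at_least n {e \<in> ME. tl vs ! i \<in> e \<and> e \<notin> path_edges (tl vs)}"
    proof -
      have s1: "{e \<in> E. vs ! Suc i \<in> e \<and> e \<notin> path_edges vs} \<subseteq> {e \<in> E. vs ! Suc i \<in> e \<and> e \<notin> path_edges (tl vs)}"
        using pe_tl by blast
      have s2: "{e \<in> ME. vs ! Suc i \<in> e \<and> e \<notin> path_edges vs} \<subseteq> {e \<in> ME. vs ! Suc i \<in> e \<and> e \<notin> path_edges (tl vs)}"
        using pe_tl by blast
      show ?thesis unfolding ti using B(1) at_least_mono[OF B(2) s1] at_least_mono[OF B(3) s2] by blast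
    qed
  qed
  show ?thesis unfolding fp_def' using 1 2 3 4 5 6 7 by blast
qed

lemma fp_take3:
  assumes fp: "n_free_path V E MV ME n vs" and l: "4 \<le> length vs" and m: "{vs ! 1, vs ! 2} \<in> ME"
  shows "n_free_path V E MV ME n (take 3 vs)"
proof -
  from fp have A: "3 \<le> length vs" "distinct vs" "set vs \<subseteq> V"
      "\<forall>i<length vs - 1. {vs ! i, vs ! Suc i} \<in> E"
      "{vs ! 0, vs ! 1} \<in> ME"
      "\<forall>i. 0 < i \<and> i < length vs - 1 \<longrightarrow>
          vs ! i \<notin> MV \<and>
          at_least (n + 1) {e \<in> E. vs ! i \<in> e \<and> e \<notin> path_edges vs} \<and>
          at_least n {e \<in> ME. vs ! i \<in> e \<and> e \<notin> path_edges vs}"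
    unfolding fp_def' by blast+
  let ?t = "take 3 vs"
  have L: "length ?t = 3" using l by simp
  have 1: "3 \<le> length ?t" using L by simp
  have 2: "distinct ?t" using A(2) by simp
  have 3: "set ?t \<subseteq> V" using A(3) by (meson set_take_subset subset_trans)
  have 4: "\<forall>i<length ?t - 1. {?t ! i, ?t ! Suc i} \<in> E"
    using A(4) L l by auto
  have 5: "{?t ! 0, ?t ! 1} \<in> ME" using A(5) by simp
  have 6: "{?t ! (length ?t - 1 - 1), ?t ! (length ?t - 1)} \<in> ME"
    using m L by (simp add: numeral_2_eq_2)
  have 7: "\<forall>i. 0 < i \<and> i < length ?t - 1 \<longrightarrow>
          ?t ! i \<notin> MV \<and>
          at_least (n + 1) {e \<in> E. ?t ! i \<in> e \<and> e \<notin> path_edges ?t} \<and>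
          at_least n {e \<in> ME. ?t ! i \<in> e \<and> e \<notin> path_edges ?t}"
  proof (intro allI impI)
    fix i assume i: "0 < i \<and> i < length ?t - 1"
    then have ti: "?t ! i = vs ! i" using L by simp
    have "0 < i \<and> i < length vs - 1" using i L l by linarith
    then have B: "vs ! i \<notin> MV"
          "at_least (n + 1) {e \<in> E. vs ! i \<in> e \<and> e \<notin> path_edges vs}"
          "at_least n {e \<in> ME. vs ! i \<in> e \<and> e \<notin> path_edges vs}"
      using A(6) by blast+
    show "?t ! i \<notin> MV \<and>
          at_least (n + 1) {e \<in> E. ?t ! i \<in> e \<and> e \<notin> path_edges ?t} \<and>
          at_least n {e \<in> ME. ?t ! i \<in> e \<and> e \<notin> path_edges ?t}"
    proof -
      have s1: "{e \<in> E. vs ! i \<in> e \<and> e \<notin> path_edges vs} \<subseteq> {e \<in> E. vs ! i \<in> e \<and> e \<notin> path_edges (?t)}"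
        using pe_take[of 3 vs] by blast
      have s2: "{e \<in> ME. vs ! i \<in> e \<and> e \<notin> path_edges vs} \<subseteq> {e \<in> ME. vs ! i \<in> e \<and> e \<notin> path_edges (?t)}"
        using pe_take[of 3 vs] by blast
      show ?thesis unfolding ti using B(1) at_least_mono[OF B(2) s1] at_least_mono[OF B(3) s2] by blast
    qed
  qed
  show ?thesis unfolding fp_def' using 1 2 3 4 5 6 7 by blast
qed


lemma fp_score_E:
  assumes fp: "n_free_path V E MV ME n vs"
  shows "at_least (n+3) {e \<in> E. vs ! 1 \<in> e}" "vs ! 1 \<notin> MV" "vs ! 1 \<in> V"
proof -
  from fp have A: "3 \<le> length vs" "distinct vs" "set vs \<subseteq> V"
      "\<forall>i<length vs - 1. {vs ! i, vs ! Suc i} \<in> E"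
      "\<forall>i. 0 < i \<and> i < length vs - 1 \<longrightarrow>
          vs ! i \<notin> MV \<and>
          at_least (n + 1) {e \<in> E. vs ! i \<in> e \<and> e \<notin> path_edges vs} \<and>
          at_least n {e \<in> ME. vs ! i \<in> e \<and> e \<notin> path_edges vs}"
    unfolding fp_def' by blast+
  have i1: "0 < (1::nat) \<and> 1 < length vs - 1" using A(1) by linarith
  then have B: "vs ! 1 \<notin> MV" "at_least (n + 1) {e \<in> E. vs ! 1 \<in> e \<and> e \<notin> path_edges vs}"
    using A(5) by blast+
  show "vs ! 1 \<notin> MV" by (fact B(1))
  show "vs ! 1 \<in> V" using A(1,3) nth_mem[of 1 vs] by auto
  let ?S = "{e \<in> E. vs ! 1 \<in> e \<and> e \<notin> path_edges vs}"
  have e1: "{vs ! 0, vs ! 1} \<in> E" "{vs ! 0, vs ! 1} \<in> path_edges vs"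
    using A(4) i1 pe_mem[of 0 vs] by auto
  have e2: "{vs ! 1, vs ! 2} \<in> E" "{vs ! 1, vs ! 2} \<in> path_edges vs"
    using A(4) i1 pe_mem[of 1 vs] by (auto simp: numeral_2_eq_2)
  have d: "vs ! 0 \<noteq> vs ! 1" "vs ! 0 \<noteq> vs ! 2"
  proof -
    have D: "\<And>i j. i < length vs \<Longrightarrow> j < length vs \<Longrightarrow> i \<noteq> j \<Longrightarrow> vs ! i \<noteq> vs ! j"
      using A(2) by (simp add: distinct_conv_nth)
    show "vs ! 0 \<noteq> vs ! 1" "vs ! 0 \<noteq> vs ! 2"
      using A(1) by (intro D; linarith)+

  qed
  have ne: "{vs ! 0, vs ! 1} \<noteq> {vs ! 1, vs ! 2}" using d by blast
  have n2: "{vs ! 1, vs ! 2} \<notin> ?S" using e2(2) by blast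
  have s2: "at_least (Suc (n+1)) (insert {vs ! 1, vs ! 2} ?S)"
    by (rule at_least_insert[OF B(2) n2])
  have n1: "{vs ! 0, vs ! 1} \<notin> insert {vs ! 1, vs ! 2} ?S" using e1(2) ne by blast
  have s3: "at_least (Suc (Suc (n+1))) (insert {vs ! 0, vs ! 1} (insert {vs ! 1, vs ! 2} ?S))"
    by (rule at_least_insert[OF s2 n1])
  have sub: "insert {vs ! 0, vs ! 1} (insert {vs ! 1, vs ! 2} ?S) \<subseteq> {e \<in> E. vs ! 1 \<in> e}"
    using e1(1) e2(1) by blast
  have eq: "n + 3 = Suc (Suc (n+1))" by simp
  show "at_least (n+3) {e \<in> E. vs ! 1 \<in> e}"
    unfolding eq by (rule at_least_mono[OF s3 sub])
qed

lemma fp_score_M3: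
  assumes fp: "n_free_path V E MV ME n vs" and l: "length vs = 3"
  shows "at_least (n+2) {e \<in> ME. vs ! 1 \<in> e}"
proof -
  from fp have A: "3 \<le> length vs" "distinct vs"
      "{vs ! 0, vs ! 1} \<in> ME" "{vs ! (length vs - 1 - 1), vs ! (length vs - 1)} \<in> ME"
      "\<forall>i. 0 < i \<and> i < length vs - 1 \<longrightarrow>
          vs ! i \<notin> MV \<and>
          at_least (n + 1) {e \<in> E. vs ! i \<in> e \<and> e \<notin> path_edges vs} \<and>
          at_least n {e \<in> ME. vs ! i \<in> e \<and> e \<notin> path_edges vs}"
    unfolding fp_def' by blast+
  have i1: "0 < (1::nat) \<and> 1 < length vs - 1" using A(1) by linarith
  then have B: "at_least n {e \<in> ME. vs ! 1 \<in> e \<and> e \<notin> path_edges vs}"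
    using A(5) by blast+
  let ?S = "{e \<in> ME. vs ! 1 \<in> e \<and> e \<notin> path_edges vs}"
  have e1: "{vs ! 0, vs ! 1} \<in> ME" "{vs ! 0, vs ! 1} \<in> path_edges vs"
    using A(3) i1 pe_mem[of 0 vs] by auto
  have e2: "{vs ! 1, vs ! 2} \<in> ME" "{vs ! 1, vs ! 2} \<in> path_edges vs"
    using A(4) l i1 pe_mem[of 1 vs] by (auto simp: numeral_2_eq_2)
  have d: "vs ! 0 \<noteq> vs ! 1" "vs ! 0 \<noteq> vs ! 2"
  proof -
    have D: "\<And>i j. i < length vs \<Longrightarrow> j < length vs \<Longrightarrow> i \<noteq> j \<Longrightarrow> vs ! i \<noteq> vs ! j"
      using A(2) by (simp add: distinct_conv_nth)
    show "vs ! 0 \<noteq> vs ! 1" "vs ! 0 \<noteq> vs ! 2"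
      using A(1) by (intro D; linarith)+

  qed
  have ne: "{vs ! 0, vs ! 1} \<noteq> {vs ! 1, vs ! 2}" using d by blast
  have n2: "{vs ! 1, vs ! 2} \<notin> ?S" using e2(2) by blast
  have s2: "at_least (Suc n) (insert {vs ! 1, vs ! 2} ?S)"
    by (rule at_least_insert[OF B n2])
  have n1: "{vs ! 0, vs ! 1} \<notin> insert {vs ! 1, vs ! 2} ?S" using e1(2) ne by blast
  have s3: "at_least (Suc (Suc n)) (insert {vs ! 0, vs ! 1} (insert {vs ! 1, vs ! 2} ?S))"
    by (rule at_least_insert[OF s2 n1])
  have sub: "insert {vs ! 0, vs ! 1} (insert {vs ! 1, vs ! 2} ?S) \<subseteq> {e \<in> ME. vs ! 1 \<in> e}"
    using e1(1) e2(1) by blast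
  have eq: "n + 2 = Suc (Suc n)" by simp
  show "at_least (n+2) {e \<in> ME. vs ! 1 \<in> e}"
    unfolding eq by (rule at_least_mono[OF s3 sub])
qed

definition minfp :: "'v set \<Rightarrow> 'v set set \<Rightarrow> nat \<Rightarrow> 'v set \<Rightarrow> 'v set set \<Rightarrow> 'v list" where
  "minfp V E n MV ME = (SOME ws. n_free_path V E MV ME n ws \<and>
      (\<forall>vs. n_free_path V E MV ME n vs \<longrightarrow> length ws \<le> length vs))"

lemma minfp_spec:
  assumes "n_free_path V E MV ME n vs"
  shows "n_free_path V E MV ME n (minfp V E n MV ME) \<and>
      (\<forall>vs. n_free_path V E MV ME n vs \<longrightarrow> length (minfp V E n MV ME) \<le> length vs)"
proof -
  obtain ws where "n_free_path V E MV ME n ws"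
      "\<forall>vs. n_free_path V E MV ME n vs \<longrightarrow> length ws \<le> length vs"
    using ex_has_least_nat[of "n_free_path V E MV ME n" vs length] assms by blast
  then have "\<exists>ws. n_free_path V E MV ME n ws \<and>
      (\<forall>vs. n_free_path V E MV ME n vs \<longrightarrow> length ws \<le> length vs)" by blast
  then show ?thesis unfolding minfp_def by (rule someI_ex)
qed

definition bob_sigma :: "'v set \<Rightarrow> 'v set set \<Rightarrow> nat \<Rightarrow> ('v \<times> 'v set) list \<Rightarrow> 'v \<Rightarrow> 'v set" where
  "bob_sigma V E n h y = (
     if (\<exists>vs. n_free_path V E (insert y (mverts h)) (medges h) n vs) then
       (let ws = minfp V E n (insert y (mverts h)) (medges h) in
        if length ws = 3 then
          (if (\<exists>e. e \<in> E \<and> e \<notin> medges h \<and> ws ! 1 \<in> e)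
           then (SOME e. e \<in> E \<and> e \<notin> medges h \<and> ws ! 1 \<in> e)
           else (SOME e. e \<in> E \<and> e \<notin> medges h))
        else {ws ! 1, ws ! 2})
     else (SOME e. e \<in> E \<and> e \<notin> medges h))"

lemma bob_sigma_fp:
  assumes fp: "n_free_path V E (insert y (mverts h)) (medges h) n vs"
  shows "\<exists>ws. n_free_path V E (insert y (mverts h)) (medges h) n ws \<and> length ws \<le> length vs \<and>
     ((length ws = 3 \<and> (\<not> (\<exists>e. e \<in> E \<and> e \<notin> medges h \<and> ws ! 1 \<in> e) \<longrightarrow>
       bob_sigma V E n h y = (SOME e. e \<in> E \<and> e \<notin> medges h)) \<and> ((\<exists>e. e \<in> E \<and> e \<notin> medges h \<and> ws ! 1 \<in> e) \<longrightarrow>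
          ws ! 1 \<in> bob_sigma V E n h y \<and> bob_sigma V E n h y \<notin> medges h \<and> bob_sigma V E n h y \<in> E))
      \<or> (4 \<le> length ws \<and> bob_sigma V E n h y = {ws ! 1, ws ! 2} \<and> {ws ! 1, ws ! 2} \<notin> medges h
          \<and> {ws ! 1, ws ! 2} \<in> E))"
proof -
  define ws where "ws = minfp V E n (insert y (mverts h)) (medges h)"
  have sp: "n_free_path V E (insert y (mverts h)) (medges h) n ws"
    "\<forall>vs. n_free_path V E (insert y (mverts h)) (medges h) n vs \<longrightarrow> length ws \<le> length vs"
    using minfp_spec[OF fp] unfolding ws_def by blast+
  have sig: "bob_sigma V E n h y = (if length ws = 3 then
          (if (\<exists>e. e \<in> E \<and> e \<notin> medges h \<and> ws ! 1 \<in> e)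
           then (SOME e. e \<in> E \<and> e \<notin> medges h \<and> ws ! 1 \<in> e)
           else (SOME e. e \<in> E \<and> e \<notin> medges h))
        else {ws ! 1, ws ! 2})"
  proof -
    have ex: "\<exists>vs. n_free_path V E (insert y (mverts h)) (medges h) n vs" using fp by blast
    show ?thesis unfolding bob_sigma_def using ex by (simp only: if_True Let_def ws_def)
  qed
  have l3: "3 \<le> length ws" using sp(1) unfolding fp_def' by blast
  show ?thesis
  proof (cases "length ws = 3")
    case True
    have "(\<exists>e. e \<in> E \<and> e \<notin> medges h \<and> ws ! 1 \<in> e) \<longrightarrow>
          ws ! 1 \<in> bob_sigma V E n h y \<and> bob_sigma V E n h y \<notin> medges h \<and> bob_sigma V E n h y \<in> E"
    proof
      assume ex: "\<exists>e. e \<in> E \<and> e \<notin> medges h \<and> ws ! 1 \<in> e"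
      then have "bob_sigma V E n h y = (SOME e. e \<in> E \<and> e \<notin> medges h \<and> ws ! 1 \<in> e)"
        using sig True by simp
      then show "ws ! 1 \<in> bob_sigma V E n h y \<and> bob_sigma V E n h y \<notin> medges h \<and> bob_sigma V E n h y \<in> E"
        using someI_ex[OF ex] by simp
    qed
    moreover have "\<not> (\<exists>e. e \<in> E \<and> e \<notin> medges h \<and> ws ! 1 \<in> e) \<longrightarrow>
       bob_sigma V E n h y = (SOME e. e \<in> E \<and> e \<notin> medges h)"
    proof
      assume ne: "\<not> (\<exists>e. e \<in> E \<and> e \<notin> medges h \<and> ws ! 1 \<in> e)"
      show "bob_sigma V E n h y = (SOME e. e \<in> E \<and> e \<notin> medges h)"
        by (simp only: sig if_P[OF True] if_not_P[OF ne])
    qed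
    moreover have "length ws \<le> length vs" using sp(2) fp by blast
    ultimately show ?thesis using sp(1) True by blast
  next
    case False
    then have l4: "4 \<le> length ws" using l3 by simp
    have allE: "\<forall>i<length ws - 1. {ws ! i, ws ! Suc i} \<in> E" using sp(1) unfolding fp_def' by blast
    have "1 < length ws - 1" using l4 by linarith
    then have "{ws ! 1, ws ! Suc 1} \<in> E" using allE by blast
    then have inE: "{ws ! 1, ws ! 2} \<in> E" by (simp add: numeral_2_eq_2)
    have nm: "{ws ! 1, ws ! 2} \<notin> medges h"
    proof
      assume "{ws ! 1, ws ! 2} \<in> medges h"
      from fp_tl[OF sp(1) l4 this] sp(2) l4 show False by fastforce
    qed
    have "bob_sigma V E n h y = {ws ! 1, ws ! 2}" using sig False by simp
    moreover have "length ws \<le> length vs" using sp(2) fp by blast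
    ultimately show ?thesis using sp(1) l4 inE nm by blast
  qed
qed


lemma bob_strat: "bob_strategy V E (bob_sigma V E n)"
  unfolding bob_strategy_def
proof (intro allI impI)
  fix h y assume a: "legal_hist V E h \<and> y \<in> V \<and> y \<notin> mverts h \<and> E - medges h \<noteq> {}"
  then have ex0: "\<exists>e. e \<in> E \<and> e \<notin> medges h" by blast
  show "bob_sigma V E n h y \<in> E \<and> bob_sigma V E n h y \<notin> medges h"
  proof (cases "\<exists>vs. n_free_path V E (insert y (mverts h)) (medges h) n vs")
    case True
    then obtain vs where "n_free_path V E (insert y (mverts h)) (medges h) n vs" by blast
    from bob_sigma_fp[OF this] obtain ws where ws:
      "(length ws = 3 \<and> (\<not> (\<exists>e. e \<in> E \<and> e \<notin> medges h \<and> ws ! 1 \<in> e) \<longrightarrow>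
       bob_sigma V E n h y = (SOME e. e \<in> E \<and> e \<notin> medges h)) \<and> ((\<exists>e. e \<in> E \<and> e \<notin> medges h \<and> ws ! 1 \<in> e) \<longrightarrow>
          ws ! 1 \<in> bob_sigma V E n h y \<and> bob_sigma V E n h y \<notin> medges h \<and> bob_sigma V E n h y \<in> E))
      \<or> (4 \<le> length ws \<and> bob_sigma V E n h y = {ws ! 1, ws ! 2} \<and> {ws ! 1, ws ! 2} \<notin> medges h
          \<and> {ws ! 1, ws ! 2} \<in> E)" by blast
    show ?thesis
    proof (cases "length ws = 3 \<and> \<not> (\<exists>e. e \<in> E \<and> e \<notin> medges h \<and> ws ! 1 \<in> e)")
      case True
      then have "bob_sigma V E n h y = (SOME e. e \<in> E \<and> e \<notin> medges h)" using ws by auto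
      then show ?thesis using someI_ex[OF ex0] by simp
    next
      case False
      then show ?thesis using ws by auto
    qed
  next
    case False
    then have nex: "\<not> Ex (n_free_path V E (insert y (mverts h)) (medges h) n)" by blast
    have "bob_sigma V E n h y = (SOME e. e \<in> E \<and> e \<notin> medges h)"
      by (simp only: bob_sigma_def if_not_P[OF nex])
    then show ?thesis using someI_ex[OF ex0] by simp
  qed
qed

lemma mverts_snoc: "mverts (xs @ [(a, b)]) = insert a (mverts xs)"
  unfolding mverts_def by auto

lemma medges_snoc: "medges (xs @ [(a, b)]) = insert b (medges xs)"
  unfolding medges_def by auto

lemma finite_medges: "finite (medges xs)"
  unfolding medges_def by simp

lemma legal_snoc_inv:
  assumes "legal_hist V E (xs @ [(a, b)])"
  shows "legal_hist V E xs \<and> a \<in> V \<and> a \<notin> mverts xs \<and> b \<in> E \<and> b \<notin> medges xs"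
  using assms by (cases rule: legal_hist.cases) auto

lemma score_lemma:
  assumes "v \<notin> MV" "finite ME" "at_least k {e \<in> ME. v \<in> e}"
  shows "k \<le> vertex_score MV ME v"
  using assms at_least_card[OF assms(3)] unfolding vertex_score_def by simp

lemma final_ge:
  assumes "enat r \<le> N" "v \<in> V" "k \<le> vertex_score (mverts (map p [0..<r])) (medges (map p [0..<r])) v"
  shows "enat k \<le> final_score V p N"
proof -
  have "enat k \<le> enat (vertex_score (mverts (map p [0..<r])) (medges (map p [0..<r])) v)"
    using assms(3) by simp
  also have "\<dots> \<le> round_score V (map p [0..<r])"
    unfolding round_score_def by (rule SUP_upper) (rule assms(2))
  also have "\<dots> \<le> final_score V p N"
    unfolding final_score_def by (rule SUP_upper) (simp add: assms(1))
  finally show ?thesis .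
qed

lemma fp_interior: "n_free_path V E MV ME n vs \<Longrightarrow> 0 < i \<Longrightarrow> i < length vs - 1 \<Longrightarrow> vs ! i \<notin> MV"
  unfolding fp_def' by blast



theorem theorem5p2:
  fixes V :: "'v set" and E :: "'v set set" and n :: nat
    and h :: "('v \<times> 'v set) list" and x :: 'v and vs :: "'v list"
  assumes "graph V E"
    and "legal_hist V E h"
    and "x \<in> V" and "x \<notin> mverts h"
    and "n_free_path V E (insert x (mverts h)) (medges h) n vs"
  shows "\<exists>\<sigma>. bob_strategy V E \<sigma> \<and>
           (\<forall>p N. maximal_play V E p N \<and> follows h x \<sigma> p N
                  \<longrightarrow> enat (n + 3) \<le> final_score V p N)"
proof -
  let ?\<sigma> = "bob_sigma V E n"
  have strat: "bob_strategy V E ?\<sigma>" by (rule bob_strat)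
  moreover have "\<forall>p N. maximal_play V E p N \<and> follows h x ?\<sigma> p N
                  \<longrightarrow> enat (n + 3) \<le> final_score V p N"
  proof (intro allI impI)
    fix p N assume asm: "maximal_play V E p N \<and> follows h x ?\<sigma> p N"
    define H where "H = length h"
    define st where "st r = map p [0..<r]" for r
    define L0 where "L0 = length vs"
    have mp: "\<forall>r. enat r \<le> N \<longrightarrow> legal_hist V E (st r)"
      "\<forall>m. N = enat m \<longrightarrow> V \<subseteq> mverts (st m) \<or> E \<subseteq> medges (st m)"
      using asm unfolding maximal_play_def st_def by blast+
    have fo: "\<forall>i<H. p i = h ! i" "enat H \<le> N" "enat H < N \<longrightarrow> fst (p H) = x"
      "\<forall>i. H \<le> i \<and> enat i < N \<longrightarrow> snd (p i) = ?\<sigma> (st i) (fst (p i))"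
      using asm unfolding follows_def st_def H_def by blast+
    have stH: "st H = h" unfolding st_def using fo(1) H_def by (intro nth_equalityI) auto
    have stS: "\<And>r. st (Suc r) = st r @ [(fst (p r), snd (p r))]" unfolding st_def by simp
    have MVS: "\<And>r. mverts (st (Suc r)) = insert (fst (p r)) (mverts (st r))"
      by (simp only: stS mverts_snoc)
    have MES: "\<And>r. medges (st (Suc r)) = insert (snd (p r)) (medges (st r))"
      by (simp only: stS medges_snoc)
    have fin: "\<And>r. finite (medges (st r))" by (rule finite_medges)
    show "enat (n + 3) \<le> final_score V p N"
    proof (rule ccontr)
      assume nf: "\<not> enat (n + 3) \<le> final_score V p N"
      have noscore: False if "enat r \<le> N" "v \<in> V"
          "n + 3 \<le> vertex_score (mverts (st r)) (medges (st r)) v" for r v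
      proof -
        have "enat (n + 3) \<le> final_score V p N"
          by (rule final_ge[OF that(1) that(2)]) (use that(3) in \<open>simp only: st_def\<close>)
        then show False using nf by blast
      qed
      define I where "I r \<longleftrightarrow> (\<exists>ws. n_free_path V E (mverts (st r)) (medges (st r)) n ws) \<and>
          (enat r < N \<longrightarrow> (\<exists>ws. n_free_path V E (insert (fst (p r)) (mverts (st r))) (medges (st r)) n ws
              \<and> length ws + (r - H) \<le> L0))" for r
      have I0: "I H"
      proof -
        have "n_free_path V E (mverts h) (medges h) n vs"
          using assms(5) by (rule fp_mono) (use fp_interior[OF assms(5)] in auto)
        moreover have "enat H < N \<longrightarrow> n_free_path V E (insert (fst (p H)) (mverts h)) (medges h) n vs"
          using fo(3) assms(5) by simp
        ultimately show ?thesis unfolding I_def stH L0_def by auto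
      qed
      have Istep: "I (Suc m)" if Hm: "H \<le> m" and le: "enat (Suc m) \<le> N" and Im: "I m" for m
      proof -
        have lt: "enat m < N" using le by (meson Suc_ile_eq)
        define y where "y = fst (p m)"
        define e where "e = snd (p m)"
        obtain vs0 where fp0: "n_free_path V E (insert y (mverts (st m))) (medges (st m)) n vs0"
          and len0: "length vs0 + (m - H) \<le> L0"
          using Im lt unfolding I_def y_def by blast
        have esig: "e = ?\<sigma> (st m) y" using fo(4) Hm lt unfolding e_def y_def by blast
        have "legal_hist V E (st (Suc m))" using mp(1) le by blast
        moreover have "st (Suc m) = st m @ [(y, e)]" unfolding y_def e_def by (rule stS)
        ultimately have "legal_hist V E (st m @ [(y, e)])" by simp
        then have lg: "y \<notin> mverts (st m)" "e \<in> E" "e \<notin> medges (st m)"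
          using legal_snoc_inv[of V E "st m" y e] by blast+
        have MV1: "mverts (st (Suc m)) = insert y (mverts (st m))" using MVS y_def by simp
        have ME1: "medges (st (Suc m)) = insert e (medges (st m))" using MES e_def by simp
        from bob_sigma_fp[OF fp0] obtain ws where
          fpw: "n_free_path V E (insert y (mverts (st m))) (medges (st m)) n ws" and
          lw: "length ws \<le> length vs0" and
          cs: "(length ws = 3 \<and> (\<not> (\<exists>e. e \<in> E \<and> e \<notin> medges (st m) \<and> ws ! 1 \<in> e) \<longrightarrow>
             ?\<sigma> (st m) y = (SOME e. e \<in> E \<and> e \<notin> medges (st m))) \<and>
             ((\<exists>e. e \<in> E \<and> e \<notin> medges (st m) \<and> ws ! 1 \<in> e) \<longrightarrow>
             ws ! 1 \<in> ?\<sigma> (st m) y \<and> ?\<sigma> (st m) y \<notin> medges (st m) \<and> ?\<sigma> (st m) y \<in> E))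
          \<or> (4 \<le> length ws \<and> ?\<sigma> (st m) y = {ws ! 1, ws ! 2} \<and> {ws ! 1, ws ! 2} \<notin> medges (st m)
             \<and> {ws ! 1, ws ! 2} \<in> E)"
          by blast
        show ?thesis
        proof (cases "length ws = 3")
          case True
          define v where "v = ws ! 1"
          have vV: "v \<in> V" and vM: "v \<notin> insert y (mverts (st m))"
            using fp_score_E[OF fpw] unfolding v_def by blast+
          have at: "at_least (n+3) {e' \<in> insert e (medges (st m)). v \<in> e'}"
          proof (cases "\<exists>e'. e' \<in> E \<and> e' \<notin> medges (st m) \<and> v \<in> e'")
            case True
            have n4: "\<not> 4 \<le> length ws" using \<open>length ws = 3\<close> by simp
            have "ws ! 1 \<in> ?\<sigma> (st m) y" using cs n4 True unfolding v_def by blast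
            then have ve: "v \<in> e" using esig unfolding v_def by simp
            have a2: "at_least (n+2) {e' \<in> medges (st m). v \<in> e'}"
              using fp_score_M3[OF fpw \<open>length ws = 3\<close>] unfolding v_def .
            have "e \<notin> {e' \<in> medges (st m). v \<in> e'}" using lg(3) by blast
            from at_least_insert[OF a2 this]
            have "at_least (Suc (n+2)) (insert e {e' \<in> medges (st m). v \<in> e'})" .
            moreover have "insert e {e' \<in> medges (st m). v \<in> e'} = {e' \<in> insert e (medges (st m)). v \<in> e'}"
              using ve by blast
            ultimately have "at_least (Suc (n+2)) {e' \<in> insert e (medges (st m)). v \<in> e'}" by (simp only:)
            moreover have eq3: "Suc (n+2) = n+3" by simp
            ultimately show ?thesis by (simp only:)
          next
            case False
            then have "{e' \<in> E. v \<in> e'} \<subseteq> {e' \<in> insert e (medges (st m)). v \<in> e'}" by blast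
            then show ?thesis using at_least_mono fp_score_E(1)[OF fpw] unfolding v_def by blast
          qed
          have "n + 3 \<le> vertex_score (mverts (st (Suc m))) (medges (st (Suc m))) v"
            unfolding MV1 ME1 by (rule score_lemma[OF vM]) (use at finite_medges ME1 in \<open>auto simp: fin\<close>)
          then have False using noscore[OF le vV] by blast
          then show ?thesis ..
        next
          case False
          then have l4: "4 \<le> length ws" and ee0: "?\<sigma> (st m) y = {ws ! 1, ws ! 2}" using cs by blast+
          have ee: "e = {ws ! 1, ws ! 2}" using ee0 esig by simp
          have fpw': "n_free_path V E (insert y (mverts (st m))) (insert e (medges (st m))) n ws"
            by (rule fp_mono[OF fpw]) (use fp_interior[OF fpw] in auto)
          have inM: "{ws ! 1, ws ! 2} \<in> insert e (medges (st m))" using ee by simp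
          have ftl: "n_free_path V E (insert y (mverts (st m))) (insert e (medges (st m))) n (tl ws)"
            by (rule fp_tl[OF fpw' l4 inM])
          have ft3: "n_free_path V E (insert y (mverts (st m))) (insert e (medges (st m))) n (take 3 ws)"
            by (rule fp_take3[OF fpw' l4 inM])
          have dw: "distinct ws" using fpw unfolding fp_def' by blast
          have part2: "\<exists>ws'. n_free_path V E (insert (fst (p (Suc m))) (insert y (mverts (st m))))
                 (insert e (medges (st m))) n ws' \<and> length ws' + (Suc m - H) \<le> L0"
          proof (cases "fst (p (Suc m)) = ws ! 1")
            case True
            have "n_free_path V E (insert (fst (p (Suc m))) (insert y (mverts (st m))))
                 (insert e (medges (st m))) n (tl ws)"
            proof (rule fp_mono[OF ftl])
              show "insert e (medges (st m)) \<subseteq> insert e (medges (st m))" by simp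
              show "\<forall>i. 0 < i \<and> i < length (tl ws) - 1 \<longrightarrow> tl ws ! i \<notin> insert (fst (p (Suc m))) (insert y (mverts (st m)))"
              proof (intro allI impI)
                fix i assume i: "0 < i \<and> i < length (tl ws) - 1"
                have "tl ws ! i \<notin> insert y (mverts (st m))" using fp_interior[OF ftl] i by blast
                moreover have "tl ws ! i = ws ! Suc i"
                proof -
                  have "i < length (tl ws)" using i by linarith
                  then show ?thesis by (rule nth_tl)
                qed
                moreover have "ws ! Suc i \<noteq> ws ! 1"
                proof -
                  have "Suc i < length ws" "1 < length ws" "Suc i \<noteq> 1" using i l4 by auto
                  then show ?thesis using dw by (simp add: nth_eq_iff_index_eq)
                qed
                ultimately show "tl ws ! i \<notin> insert (fst (p (Suc m))) (insert y (mverts (st m)))"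
                  using True by auto
              qed
            qed
            moreover have "length (tl ws) + (Suc m - H) \<le> L0" using lw len0 Hm l4 by simp
            ultimately show ?thesis by blast
          next
            case False
            have "n_free_path V E (insert (fst (p (Suc m))) (insert y (mverts (st m))))
                 (insert e (medges (st m))) n (take 3 ws)"
            proof (rule fp_mono[OF ft3])
              show "insert e (medges (st m)) \<subseteq> insert e (medges (st m))" by simp
              show "\<forall>i. 0 < i \<and> i < length (take 3 ws) - 1 \<longrightarrow> take 3 ws ! i \<notin> insert (fst (p (Suc m))) (insert y (mverts (st m)))"
              proof (intro allI impI)
                fix i assume i: "0 < i \<and> i < length (take 3 ws) - 1"
                have "take 3 ws ! i \<notin> insert y (mverts (st m))" using fp_interior[OF ft3] i by blast
                moreover have "i = 1" using i l4 by simp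
                ultimately show "take 3 ws ! i \<notin> insert (fst (p (Suc m))) (insert y (mverts (st m)))"
                  using False by auto
              qed
            qed
            moreover have "length (take 3 ws) + (Suc m - H) \<le> L0" using lw len0 Hm l4 by simp
            ultimately show ?thesis by blast
          qed
          show ?thesis unfolding I_def MV1 ME1 using ft3 part2 by blast
        qed
      qed
      have Iall: "I (H + j)" if "enat (H + j) \<le> N" for j
        using that
      proof (induction j)
        case 0
        then show ?case using I0 by simp
      next
        case (Suc j)
        have "enat (H + j) \<le> N" using Suc.prems order_trans[of "enat (H + j)" "enat (H + Suc j)" N] by simp
        then have "I (H + j)" by (rule Suc.IH)
        then show ?case using Istep[of "H + j"] Suc.prems by simp
      qed
      show False
      proof (cases "enat (H + L0) < N")
        case True
        then obtain ws where "n_free_path V E (insert (fst (p (H + L0))) (mverts (st (H + L0)))) (medges (st (H + L0))) n ws"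
          and "length ws + L0 \<le> L0"
          using Iall[of L0] unfolding I_def by auto
        moreover have "3 \<le> length ws" using calculation(1) unfolding fp_def' by blast
        ultimately show False by simp
      next
        case False
        then have "N \<le> enat (H + L0)" by simp
        then obtain M where NM: "N = enat M" by (cases N) auto
        have HM: "H \<le> M" using fo(2) NM by simp
        have "I (H + (M - H))" using Iall[of "M - H"] HM NM by simp
        then obtain ws where fpw: "n_free_path V E (mverts (st M)) (medges (st M)) n ws"
          unfolding I_def using HM by auto
        have vV: "ws ! 1 \<in> V" and vM: "ws ! 1 \<notin> mverts (st M)"
          using fp_score_E[OF fpw] by blast+
        have "E \<subseteq> medges (st M)" using mp(2) NM vV vM by blast
        then have "{e \<in> E. ws ! 1 \<in> e} \<subseteq> {e \<in> medges (st M). ws ! 1 \<in> e}" by blast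
        then have "at_least (n+3) {e \<in> medges (st M). ws ! 1 \<in> e}"
          using at_least_mono fp_score_E(1)[OF fpw] by blast
        then have "n + 3 \<le> vertex_score (mverts (st M)) (medges (st M)) (ws ! 1)"
          by (rule score_lemma[OF vM fin])
        then show False using noscore[of M "ws ! 1"] NM vV by simp
      qed
    qed
  qed
  ultimately show ?thesis by blast
qed

end
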